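(* Let $n$ be a positive integer and $\mathbf a\in\mathbb N^n$. For each $\mathbf j\in\{0,1\}^n$ with $\chi(\mathbf a)\trianglerighteq_1\mathbf j$, there exists a unique vector $\mathbf b\in\mathbb N^n$ with $\chi(\mathbf b)=\mathbf j$ such that $\mathcal F_{H_\top(n)}(\mathbf a,\mathbf b)$ contains an unsplittable flow; moreover, in that case $\mathcal F_{H_\top(n)}(\mathbf a,\mathbf b)$ contains exactly one unsplittable flow. For all other vectors $\mathbf b\in\mathbb N^n$ (i.e. those for which $\chi(\mathbf a)\trianglerighteq_1\chi(\mathbf b)$ fails, or which are not this unique vector for $\mathbf j=\chi(\mathbf b)$), $\mathcal F_{H_\top(n)}(\mathbf a,\mathbf b)$ has no unsplittable flows.
   Context: $H_\top(n)$ is the directed graph with vertices $(i,-1),(i,0),(i,1)$ for $1\le i\le n$ and a vertex $s$, and arcs $((i,-1),(i,0))$ and $((i,0),(i,1))$ for $1\le i\le n$, $((i,0),(i+1,0))$ for $1\le i\le n-1$, and $((n,0),s)$. $\mathcal F_{H_\top(n)}(\mathbf a,\mathbf b)$ is the set of nonnegative real arc weightings such that at each vertex outflow minus inflow equals its netflow: $a_i$ at $(i,-1)$, $-b_i$ at $(i,1)$, $0$ at $(i,0)$, and $-\sum_ia_i+\sum_ib_i$ at $s$. An unsplittable flow is an integral flow in which no two unit trajectories split; equivalently, an integral flow in which every vertex has at most one outgoing arc with positive flow and no vertex with negative netflow has an outgoing arc with positive flow. $\chi(\mathbf v)_i=1$ if $v_i>0$, else $0$. Dominance $\mathbf v\trianglerighteq\mathbf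 w$: $\sum_{k\le i}v_k\ge\sum_{k\le i}w_k$ for all $i$. For $\mathbf v\trianglerighteq\mathbf w$ with $\chi(\mathbf v)\trianglerighteq\chi(\mathbf w)$, let $Z_{\mathbf v}=\{i:v_i=0\}$, $Z_{\mathbf w}=\{i:w_i=0\}$ and form the matching $M$ by repeatedly matching the largest unmatched $i'\in Z_{\mathbf v}$ to the largest unmatched element of $Z_{\mathbf w}$ that is $\le i'$; $\mathbf v\trianglerighteq_1\mathbf w$ means $\mathbf v\trianglerighteq\mathbf w$, $\chi(\mathbf v)\trianglerighteq\chi(\mathbf w)$ and $i-j\le1$ for all $(i,j)\in M$. *)

theory Defs
  imports Complex_Main
begin

text \<open>Vertices of H_top(n): V i k stands for (i,k), S for the sink s.\<close>
datatype vtx = V nat int | S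

definition htop_verts :: "nat \<Rightarrow> vtx set" where
  "htop_verts n = {V i k | i k. 1 \<le> i \<and> i \<le> n \<and> k \<in> {-1, 0, 1}} \<union> {S}"

definition htop_arcs :: "nat \<Rightarrow> (vtx \<times> vtx) set" where
  "htop_arcs n =
     {(V i (-1), V i 0) | i. 1 \<le> i \<and> i \<le> n}
   \<union> {(V i 0, V i 1) | i. 1 \<le> i \<and> i \<le> n}
   \<union> {(V i 0, V (i+1) 0) | i. 1 \<le> i \<and> i \<le> n - 1}
   \<union> {(V n 0, S)}"

text \<open>Vectors in N^n are lists of length n; entry i (1-based) is the list element at i-1.\<close>
definition netflow :: "nat list \<Rightarrow> nat list \<Rightarrow> vtx \<Rightarrow> real" where
  "netflow a b v = (case v of
      V i k \<Rightarrow> (if k = -1 then real (a ! (i - 1))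
               else if k = 1 then - real (b ! (i - 1)) else 0)
    | S \<Rightarrow> - real (sum_list a) + real (sum_list b))"

definition flows :: "nat \<Rightarrow> nat list \<Rightarrow> nat list \<Rightarrow> (vtx \<times> vtx \<Rightarrow> real) set" where
  "flows n a b = {f. (\<forall>e. e \<notin> htop_arcs n \<longrightarrow> f e = 0)
      \<and> (\<forall>e\<in>htop_arcs n. 0 \<le> f e)
      \<and> (\<forall>v\<in>htop_verts n.
           (\<Sum>e\<in>{e\<in>htop_arcs n. fst e = v}. f e) - (\<Sum>e\<in>{e\<in>htop_arcs n. snd e = v}. f e)
             = netflow a b v)}"

definition unsplittable :: "nat \<Rightarrow> nat list \<Rightarrow> nat list \<Rightarrow> (vtx \<times> vtx \<Rightarrow> real) \<Rightarrow> bool" where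
  "unsplittable n a b f \<longleftrightarrow> f \<in> flows n a b
     \<and> (\<forall>e\<in>htop_arcs n. f e \<in> \<int>)
     \<and> (\<forall>v\<in>htop_verts n. card {e\<in>htop_arcs n. fst e = v \<and> 0 < f e} \<le> 1)
     \<and> (\<forall>v\<in>htop_verts n. netflow a b v < 0 \<longrightarrow> (\<forall>e\<in>htop_arcs n. fst e = v \<longrightarrow> f e = 0))"

definition chi :: "nat list \<Rightarrow> nat list" where
  "chi v = map (\<lambda>x. if 0 < x then 1 else 0) v"

definition dominates :: "nat list \<Rightarrow> nat list \<Rightarrow> bool" where
  "dominates v w \<longleftrightarrow> (\<forall>i\<le>length v. sum_list (take i w) \<le> sum_list (take i v))"

definition zeros :: "nat list \<Rightarrow> nat set" where
  "zeros v = {i. 1 \<le> i \<and> i \<le> length v \<and> v ! (i - 1) = 0}"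

fun greedy :: "nat list \<Rightarrow> nat set \<Rightarrow> (nat \<times> nat) list" where
  "greedy [] W = []"
| "greedy (i # is) W =
     (if \<exists>j\<in>W. j \<le> i
      then (let j = Max {j\<in>W. j \<le> i} in (i, j) # greedy is (W - {j}))
      else greedy is W)"

definition zero_matching :: "nat list \<Rightarrow> nat list \<Rightarrow> (nat \<times> nat) set" where
  "zero_matching v w = set (greedy (rev (sorted_list_of_set (zeros v))) (zeros w))"

definition dominates1 :: "nat list \<Rightarrow> nat list \<Rightarrow> bool" where
  "dominates1 v w \<longleftrightarrow> dominates v w \<and> dominates (chi v) (chi w)
      \<and> (\<forall>(i, j)\<in>zero_matching v w. i - j \<le> 1)"

end

theory Submission
  imports Defs
begin

lemma greedy_restrict:
  "(\<forall>i\<in>set is. i \<le> m) \<Longrightarrow> greedy is W = greedy is {j\<in>W. j \<le> m}"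
proof (induction "is" arbitrary: W)
  case Nil then show ?case by simp
next
  case (Cons i "is")
  have e1: "{j\<in>{j\<in>W. j \<le> m}. j \<le> i} = {j\<in>W. j \<le> i}" using Cons.prems by auto
  have e2: "\<And>J. {j\<in>W. j \<le> m} - {J} = {j\<in>W - {J}. j \<le> m}" by auto
  have ex: "(\<exists>j\<in>{j\<in>W. j \<le> m}. j \<le> i) = (\<exists>j\<in>W. j \<le> i)" using Cons.prems by auto
  show ?case
  proof (cases "\<exists>j\<in>W. j \<le> i")
    case True
    let ?J = "Max {j\<in>W. j \<le> i}"
    have "greedy is (W - {?J}) = greedy is {j\<in>W - {?J}. j \<le> m}"
      by (rule Cons.IH) (use Cons.prems in simp)
    then show ?thesis using True ex by (simp only: greedy.simps e1 e2 Let_def) simp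
  next
    case False
    then show ?thesis using ex Cons by (simp only: greedy.simps e1) simp
  qed
qed

definition zp :: "nat list \<Rightarrow> nat list \<Rightarrow> bool" where
  "zp v w \<longleftrightarrow> (\<forall>(i, j)\<in>zero_matching v w. i - j \<le> 1)"

lemma zeros_snoc: "zeros (v @ [x]) = zeros v \<union> (if x = 0 then {Suc (length v)} else {})"
  unfolding zeros_def by (auto simp: nth_append le_Suc_eq)

lemma zeros_le: "i \<in> zeros v \<Longrightarrow> i \<le> length v \<and> 1 \<le> i"
  unfolding zeros_def by auto

lemma finite_zeros: "finite (zeros v)"
  unfolding zeros_def by (rule finite_subset[of _ "{..length v}"]) auto

lemma sorted_insert_max:
  assumes "finite Z" "\<forall>z\<in>Z. z < m"
  shows "sorted_list_of_set (insert m Z) = sorted_list_of_set Z @ [(m::nat)]"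
  apply (rule sorted_distinct_set_unique)
  using assms by (auto simp del: sorted_list_of_set_insert_remove sorted_list_of_set_insert simp: sorted_append)

lemma rev_zeros_snoc0:
  "rev (sorted_list_of_set (zeros (v @ [0]))) = Suc (length v) # rev (sorted_list_of_set (zeros v))"
proof -
  have "zeros (v @ [0]) = insert (Suc (length v)) (zeros v)" by (simp add: zeros_snoc)
  moreover have "\<forall>z\<in>zeros v. z < Suc (length v)" using zeros_le by force
  ultimately show ?thesis using sorted_insert_max[OF finite_zeros] by simp
qed

lemma zp_snoc1:
  assumes "length v = length w" "x \<noteq> 0"
  shows "zp (v @ [x]) (w @ [y]) = zp v w"
proof -
  have zv: "zeros (v @ [x]) = zeros v" using assms by (simp add: zeros_snoc)
  have "\<forall>i\<in>set (rev (sorted_list_of_set (zeros v))). i \<le> length v"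
    using zeros_le finite_zeros by auto
  hence "greedy (rev (sorted_list_of_set (zeros v))) (zeros (w @ [y]))
       = greedy (rev (sorted_list_of_set (zeros v))) {j\<in>zeros (w @ [y]). j \<le> length v}"
    by (rule greedy_restrict)
  also have "{j\<in>zeros (w @ [y]). j \<le> length v} = zeros w"
    using assms(1) by (auto simp: zeros_snoc dest: zeros_le)
  finally show ?thesis unfolding zp_def zero_matching_def zv by simp
qed

lemma zp_snoc00:
  assumes "length v = length w"
  shows "zp (v @ [0]) (w @ [0]) = zp v w"
proof -
  let ?n = "Suc (length v)"
  have W: "zeros (w @ [0]) = insert ?n (zeros w)" using assms by (simp add: zeros_snoc)
  have nn: "?n \<notin> zeros w" using assms zeros_le by force
  have M: "Max {j\<in>zeros (w @ [0]). j \<le> ?n} = ?n"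
    by (rule Max_eqI) (use finite_zeros W in auto)
  have R: "zeros (w @ [0]) - {?n} = zeros w" using W nn by auto
  show ?thesis unfolding zp_def zero_matching_def rev_zeros_snoc0
    using M R W by (simp add: Let_def)
qed

lemma zp_snoc001:
  assumes "length v = Suc (length w)"
  shows "zp (v @ [0]) (w @ [0, 1]) = zp v (w @ [1])"
proof -
  let ?n = "Suc (length v)"
  have W: "zeros (w @ [0, 1]) = insert (length v) (zeros w)"
    using zeros_snoc[of "w @ [0]" 1] zeros_snoc[of w 0] assms by simp
  have W1: "zeros (w @ [1]) = zeros w" by (simp add: zeros_snoc)
  have nn: "length v \<notin> zeros w" using assms zeros_le by force
  have M: "Max {j\<in>zeros (w @ [0, 1]). j \<le> ?n} = length v"
    by (rule Max_eqI) (use finite_zeros W assms in \<open>auto dest: zeros_le\<close>)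
  have R: "zeros (w @ [0,1]) - {length v} = zeros (w @ [1])" using W W1 nn by auto
  show ?thesis unfolding zp_def zero_matching_def rev_zeros_snoc0
    using M R W by (simp add: Let_def)
qed

lemma zp_snoc011:
  assumes "length v = Suc (length w)" "zeros w \<noteq> {}"
  shows "\<not> zp (v @ [0]) (w @ [1, 1])"
proof -
  let ?n = "Suc (length v)"
  have W: "zeros (w @ [1, 1]) = zeros w"
    using zeros_snoc[of "w @ [1]" 1] zeros_snoc[of w 1] by simp
  let ?J = "Max {j\<in>zeros w. j \<le> ?n}"
  have ne: "{j\<in>zeros w. j \<le> ?n} \<noteq> {}" using assms zeros_le by fastforce
  have "?J \<in> zeros w" using Max_in[OF _ ne] finite_zeros by auto
  hence J: "?J \<le> length w" using zeros_le by blast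
  have ex: "\<exists>j\<in>zeros w. j \<le> ?n" using ne by auto
  have "(?n, ?J) \<in> zero_matching (v @ [0]) (w @ [1, 1])"
    unfolding zero_matching_def rev_zeros_snoc0 W using ex by (simp add: Let_def)
  moreover have "\<not> ?n - ?J \<le> 1" using J assms by simp
  ultimately show ?thesis unfolding zp_def by auto
qed

definition sc :: "nat list \<Rightarrow> nat list \<Rightarrow> nat \<Rightarrow> int" where
  "sc a b k = int (sum_list (take k a)) - int (sum_list (take k b))"

definition feas :: "nat list \<Rightarrow> nat list \<Rightarrow> bool" where
  "feas a b \<longleftrightarrow> (\<forall>k\<le>length a. 0 \<le> sc a b k \<and> (0 < k \<longrightarrow> 0 < b ! (k - 1) \<longrightarrow> sc a b k = 0))"

lemma feas_Nil: "feas [] []"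
  unfolding feas_def sc_def by simp

lemma feas_snoc:
  assumes "length a = length b"
  shows "feas (a @ [x]) (b @ [y]) \<longleftrightarrow> feas a b
     \<and> 0 \<le> int (sum_list a + x) - int (sum_list b + y)
     \<and> (0 < y \<longrightarrow> int (sum_list a + x) - int (sum_list b + y) = 0)"
proof -
  have s1: "sc (a @ [x]) (b @ [y]) k = sc a b k" if "k \<le> length a" for k
    using that assms unfolding sc_def by simp
  have s2: "sc (a @ [x]) (b @ [y]) (Suc (length a)) = int (sum_list a + x) - int (sum_list b + y)"
    using assms unfolding sc_def by simp
  have n1: "(b @ [y]) ! (k - 1) = b ! (k - 1)" if "0 < k" "k \<le> length a" for k
    using that assms by (auto simp: nth_append)
  have n2: "(b @ [y]) ! (Suc (length a) - 1) = y" using assms by simp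
  let ?P = "\<lambda>a b k. 0 \<le> sc a b k \<and> (0 < k \<longrightarrow> 0 < b ! (k - 1) \<longrightarrow> sc a b k = 0)"
  have eqk: "?P (a @ [x]) (b @ [y]) k = ?P a b k" if "k \<le> length a" for k
    using s1[OF that] n1[OF _ that] by auto
  have eqn: "?P (a @ [x]) (b @ [y]) (Suc (length a)) = (0 \<le> int (sum_list a + x) - int (sum_list b + y)
     \<and> (0 < y \<longrightarrow> int (sum_list a + x) - int (sum_list b + y) = 0))"
    using s2 n2 by simp
  have "feas (a @ [x]) (b @ [y]) = ((\<forall>k\<le>length a. ?P (a @ [x]) (b @ [y]) k) \<and> ?P (a @ [x]) (b @ [y]) (Suc (length a)))"
    unfolding feas_def by (auto simp: le_Suc_eq)
  also have "\<dots> = ((\<forall>k\<le>length a. ?P a b k) \<and> ?P (a @ [x]) (b @ [y]) (Suc (length a)))"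
    using eqk by auto
  finally show ?thesis unfolding eqn feas_def by simp
qed

lemma feas_full:
  assumes "feas a b" "length a = length b"
  shows "sum_list b \<le> sum_list a"
proof -
  have "0 \<le> sc a b (length a)" using assms unfolding feas_def by auto
  thus ?thesis using assms unfolding sc_def by simp
qed

lemma chi_snoc: "chi (a @ [x]) = chi a @ [if 0 < x then 1 else 0]"
  unfolding chi_def by simp

lemma length_chi[simp]: "length (chi a) = length a"
  unfolding chi_def by simp

lemma chi_bin: "set (chi a) \<subseteq> {0, 1}"
  unfolding chi_def by auto

lemma chi_id: "set w \<subseteq> {0, 1} \<Longrightarrow> chi w = w"
  unfolding chi_def by (induction w) auto

lemma chi_eq_snoc:
  "chi b = w @ [y] \<longleftrightarrow> (\<exists>b' t. b = b' @ [t] \<and> chi b' = w \<and> y = (if 0 < t then 1 else 0))"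
proof
  assume h: "chi b = w @ [y]"
  hence "b \<noteq> []" unfolding chi_def by auto
  then obtain b' t where "b = b' @ [t]" using rev_exhaust by blast
  thus "\<exists>b' t. b = b' @ [t] \<and> chi b' = w \<and> y = (if 0 < t then 1 else 0)"
    using h by (auto simp: chi_snoc)
qed (auto simp: chi_snoc)

lemma dom_snoc:
  assumes "length v = length w"
  shows "dominates (v @ [x]) (w @ [y]) \<longleftrightarrow> dominates v w \<and> sum_list w + y \<le> sum_list v + x"
  unfolding dominates_def using assms
  by (auto simp: le_Suc_eq)

lemma dom_sum: "length v = length w \<Longrightarrow> dominates v w \<Longrightarrow> sum_list w \<le> sum_list v"
  unfolding dominates_def by (metis order.refl take_all)

lemma d1_bin: "set v \<subseteq> {0, 1} \<Longrightarrow> set w \<subseteq> {0, 1} \<Longrightarrow>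
  dominates1 v w \<longleftrightarrow> dominates v w \<and> zp v w"
  unfolding dominates1_def zp_def by (simp add: chi_id)

lemma sum_bin: "set v \<subseteq> {0, 1} \<Longrightarrow> sum_list v \<le> length v"
  by (induction v) auto

lemma sum_ones: "zeros w = {} \<Longrightarrow> set w \<subseteq> {0, 1} \<Longrightarrow> sum_list w = length w"
proof (induction w rule: rev_induct)
  case Nil then show ?case by simp
next
  case (snoc x xs)
  then show ?case by (auto simp: zeros_snoc split: if_splits)
qed

lemma chi_snocE:
  assumes "chi b0 = w @ [y]"
  obtains b t where "b0 = b @ [t]" "chi b = w" "y = (if 0 < t then 1 else 0)"
  using chi_eq_snoc[THEN iffD1, OF assms] by blast

lemma len_of_chi: "chi b = w \<Longrightarrow> length b = length w"
  using length_chi by metis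

lemma caseX:
  assumes "length a = length w" "0 < x" "y \<in> {0, 1}"
  shows "(\<exists>b. chi b = w @ [y] \<and> feas (a @ [x]) b) \<longleftrightarrow> (\<exists>b. chi b = w \<and> feas a b)"
proof
  assume "\<exists>b. chi b = w @ [y] \<and> feas (a @ [x]) b"
  then obtain b0 where b0: "chi b0 = w @ [y]" "feas (a @ [x]) b0" by blast
  from chi_snocE[OF b0(1)] obtain b t where bt: "b0 = b @ [t]" "chi b = w" .
  have lb: "length a = length b" using assms(1) len_of_chi[OF bt(2)] by simp
  have "feas a b" using feas_snoc[OF lb, of x t] b0(2) bt(1) by simp
  then show "\<exists>b. chi b = w \<and> feas a b" using bt(2) by blast
next
  assume "\<exists>b. chi b = w \<and> feas a b"
  then obtain b where b: "chi b = w" "feas a b" by blast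
  have lb: "length a = length b" using assms(1) len_of_chi[OF b(1)] by simp
  have AB: "sum_list b \<le> sum_list a" using feas_full[OF b(2) lb] .
  show "\<exists>b. chi b = w @ [y] \<and> feas (a @ [x]) b"
  proof (cases "y = 0")
    case True
    have "feas (a @ [x]) (b @ [0])" using feas_snoc[OF lb, of x 0] b(2) AB by simp
    moreover have "chi (b @ [0]) = w @ [y]" using b(1) True by (simp add: chi_snoc)
    ultimately show ?thesis by blast
  next
    case False
    hence y1: "y = 1" using assms by auto
    define t where "t = sum_list a + x - sum_list b"
    have "feas (a @ [x]) (b @ [t])" using feas_snoc[OF lb, of x t] b(2) AB unfolding t_def by simp
    moreover have "chi (b @ [t]) = w @ [y]" using b(1) y1 AB assms(2) unfolding t_def by (simp add: chi_snoc)
    ultimately show ?thesis by blast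
  qed
qed

lemma case00:
  assumes "length a = length w"
  shows "(\<exists>b. chi b = w @ [0] \<and> feas (a @ [0]) b) \<longleftrightarrow> (\<exists>b. chi b = w \<and> feas a b)"
proof
  assume "\<exists>b. chi b = w @ [0] \<and> feas (a @ [0]) b"
  then obtain b0 where b0: "chi b0 = w @ [0]" "feas (a @ [0]) b0" by blast
  from chi_snocE[OF b0(1)] obtain b t where bt: "b0 = b @ [t]" "chi b = w" .
  have lb: "length a = length b" using assms(1) len_of_chi[OF bt(2)] by simp
  have "feas a b" using feas_snoc[OF lb, of 0 t] b0(2) bt(1) by simp
  then show "\<exists>b. chi b = w \<and> feas a b" using bt(2) by blast
next
  assume "\<exists>b. chi b = w \<and> feas a b"
  then obtain b where b: "chi b = w" "feas a b" by blast
  have lb: "length a = length b" using assms(1) len_of_chi[OF b(1)] by simp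
  have AB: "sum_list b \<le> sum_list a" using feas_full[OF b(2) lb] .
  have "feas (a @ [0]) (b @ [0])" using feas_snoc[OF lb, of 0 0] b(2) AB by simp
  moreover have "chi (b @ [0]) = w @ [0]" using b(1) by (simp add: chi_snoc)
  ultimately show "\<exists>b. chi b = w @ [0] \<and> feas (a @ [0]) b" by blast
qed

lemma case001:
  assumes "length a = Suc (length w)"
  shows "(\<exists>b. chi b = w @ [0, 1] \<and> feas (a @ [0]) b) \<longleftrightarrow> (\<exists>b. chi b = w @ [1] \<and> feas a b)"
proof -
  have "a \<noteq> []" using assms by auto
  then obtain a0 z where a: "a = a0 @ [z]" using rev_exhaust by blast
  have la0: "length a0 = length w" using assms a by simp
  have L: "(\<exists>b. chi b = (w @ [0]) @ [1] \<and> feas (a @ [0]) b) \<longleftrightarrow> (\<exists>b. chi b = w @ [1] \<and> feas a b)"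
  proof
    assume "\<exists>b. chi b = (w @ [0]) @ [1] \<and> feas (a @ [0]) b"
    then obtain b0 where b0: "chi b0 = (w @ [0]) @ [1]" "feas (a @ [0]) b0" by blast
    from chi_snocE[OF b0(1)] obtain b1 t where bt: "b0 = b1 @ [t]" "chi b1 = w @ [0]" "1 = (if 0 < t then 1 else (0::nat))" .
    from chi_snocE[OF bt(2)] obtain b s where bs: "b1 = b @ [s]" "chi b = w" "0 = (if 0 < s then 1 else (0::nat))" .
    have t: "0 < t" using bt(3) by (auto split: if_splits)
    have s: "s = 0" using bs(3) by (auto split: if_splits)
    have lb: "length a0 = length b" using la0 len_of_chi[OF bs(2)] by simp
    have lb1: "length a = length (b @ [0])" using lb a by simp
    have f1: "feas a (b @ [0])" and e1: "int (sum_list a) - int (sum_list b + t) = 0"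
      using feas_snoc[OF lb1, of 0 t] b0(2) bt(1) bs(1) s t by auto
    have f2: "feas a0 b" using f1 feas_snoc[OF lb, of z 0] a by simp
    have "feas a (b @ [t])" using feas_snoc[OF lb, of z t] f2 a e1 by simp
    moreover have "chi (b @ [t]) = w @ [1]" using bs(2) t by (simp add: chi_snoc)
    ultimately show "\<exists>b. chi b = w @ [1] \<and> feas a b" by blast
  next
    assume "\<exists>b. chi b = w @ [1] \<and> feas a b"
    then obtain b0 where b0: "chi b0 = w @ [1]" "feas a b0" by blast
    from chi_snocE[OF b0(1)] obtain b t where bt: "b0 = b @ [t]" "chi b = w" "1 = (if 0 < t then 1 else (0::nat))" .
    have t: "0 < t" using bt(3) by (auto split: if_splits)
    have lb: "length a0 = length b" using la0 len_of_chi[OF bt(2)] by simp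
    have lb1: "length a = length (b @ [0])" using lb a by simp
    have f2: "feas a0 b" and e: "int (sum_list a0 + z) - int (sum_list b + t) = 0"
      using feas_snoc[OF lb, of z t] b0(2) bt(1) a t by auto
    have f1: "feas a (b @ [0])" using feas_snoc[OF lb, of z 0] f2 e a by simp
    have "feas (a @ [0]) ((b @ [0]) @ [t])" using feas_snoc[OF lb1, of 0 t] f1 e a by simp
    moreover have "chi ((b @ [0]) @ [t]) = (w @ [0]) @ [1]" using bt(2) t by (simp only: chi_snoc) simp
    ultimately show "\<exists>b'. chi b' = (w @ [0]) @ [1] \<and> feas (a @ [0]) b'" by blast
  qed
  thus ?thesis by simp
qed

lemma case011:
  assumes "length a = Suc (length w)"
  shows "\<not> (\<exists>b. chi b = w @ [1, 1] \<and> feas (a @ [0]) b)"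
proof
  have "a \<noteq> []" using assms by auto
  then obtain a0 z where a: "a = a0 @ [z]" using rev_exhaust by blast
  have la0: "length a0 = length w" using assms a by simp
  assume "\<exists>b. chi b = w @ [1, 1] \<and> feas (a @ [0]) b"
  then obtain b0 where b0: "chi b0 = (w @ [1]) @ [1]" "feas (a @ [0]) b0" by auto
  from chi_snocE[OF b0(1)] obtain b1 t where bt: "b0 = b1 @ [t]" "chi b1 = w @ [1]" "1 = (if 0 < t then 1 else (0::nat))" .
  from chi_snocE[OF bt(2)] obtain b s where bs: "b1 = b @ [s]" "chi b = w" "1 = (if 0 < s then 1 else (0::nat))" .
  have t: "0 < t" using bt(3) by (auto split: if_splits)
  have s: "0 < s" using bs(3) by (auto split: if_splits)
  have lb: "length a0 = length b" using la0 len_of_chi[OF bs(2)] by simp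
  have lb1: "length a = length (b @ [s])" using lb a by simp
  have f1: "feas a (b @ [s])" and e1: "int (sum_list a) - int (sum_list b + s + t) = 0"
    using feas_snoc[OF lb1, of 0 t] b0(2) bt(1) bs(1) t by auto
  have "int (sum_list a0 + z) - int (sum_list b + s) = 0"
    using f1 feas_snoc[OF lb, of z s] a s by simp
  thus False using e1 a t by simp
qed

lemma case01nil: "\<not> (\<exists>b. chi b = [1] \<and> feas [0] b)"
proof
  assume "\<exists>b. chi b = [1] \<and> feas [0] b"
  then obtain b0 where b0: "chi b0 = [] @ [1]" "feas ([] @ [0]) b0" by auto
  from chi_snocE[OF b0(1)] obtain b t where bt: "b0 = b @ [t]" "chi b = []" "1 = (if 0 < t then 1 else (0::nat))" .
  have t: "0 < t" using bt(3) by (auto split: if_splits)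
  have "b = []" using bt(2) unfolding chi_def by simp
  thus False using feas_snoc[of "[]" "[]" 0 t] b0(2) bt(1) t by simp
qed

lemma mainL:
  "length w = length a \<Longrightarrow> set w \<subseteq> {0, 1} \<Longrightarrow>
   (\<exists>b. chi b = w \<and> feas a b) \<longleftrightarrow> (dominates (chi a) w \<and> zp (chi a) w)"
proof (induction a arbitrary: w rule: rev_induct)
  case Nil
  hence w: "w = []" by simp
  have "chi [] = [] \<and> feas [] []" using feas_Nil by (simp add: chi_def)
  moreover have "dominates (chi []) []" by (simp add: dominates_def chi_def)
  moreover have "zeros [] = {}" by (simp add: zeros_def)
  hence "zp (chi []) []" by (simp add: zp_def zero_matching_def chi_def)
  ultimately show ?case using w by auto
next
  case (snoc x a')
  have "w \<noteq> []" using snoc.prems by auto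
  then obtain w' y where w: "w = w' @ [y]" using rev_exhaust by blast
  have lw: "length w' = length a'" using snoc.prems w by simp
  have yb: "y \<in> {0, 1}" and wb: "set w' \<subseteq> {0, 1}" using snoc.prems w by auto
  let ?v = "chi a'"
  have lv: "length ?v = length w'" using lw by simp
  have vb: "set ?v \<subseteq> {0, 1}" by (rule chi_bin)
  show ?case
  proof (cases "0 < x")
    case True
    have ca: "chi (a' @ [x]) = ?v @ [1]" using True by (simp add: chi_snoc)
    have "dominates (?v @ [1]) (w' @ [y]) = dominates ?v w'"
      using dom_snoc[OF lv, of 1 y] dom_sum[OF lv] yb by auto
    moreover have "zp (?v @ [1]) (w' @ [y]) = zp ?v w'" using zp_snoc1[OF lv] by simp
    ultimately show ?thesis using caseX[OF lw[symmetric] True yb] snoc.IH[OF lw wb] w ca by simp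
  next
    case False
    hence x0: "x = 0" by simp
    have ca: "chi (a' @ [x]) = ?v @ [0]" using x0 by (simp add: chi_snoc)
    show ?thesis
    proof (cases "y = 0")
      case True
      have "dominates (?v @ [0]) (w' @ [0]) = dominates ?v w'"
        using dom_snoc[OF lv, of 0 0] dom_sum[OF lv] by auto
      moreover have "zp (?v @ [0]) (w' @ [0]) = zp ?v w'" using zp_snoc00[OF lv] by simp
      ultimately show ?thesis using case00[OF lw[symmetric]] snoc.IH[OF lw wb] w ca x0 True by simp
    next
      case False
      hence y1: "y = 1" using yb by simp
      show ?thesis
      proof (cases w' rule: rev_exhaust)
        case Nil
        hence a'0: "a' = []" using lw by simp
        have "\<not> dominates (?v @ [0]) (w' @ [1])"
          using dom_snoc[OF lv, of 0 1] Nil a'0 by (simp add: chi_def)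
        thus ?thesis using case01nil w y1 x0 Nil a'0 ca by simp
      next
        case (snoc w0 y0)
        have lw0: "length a' = Suc (length w0)" using lw snoc by simp
        have y0b: "y0 \<in> {0, 1}" and w0b: "set w0 \<subseteq> {0, 1}" using wb snoc by auto
        have "a' \<noteq> []" using lw0 by auto
        then obtain a0 z where a0: "a' = a0 @ [z]" using rev_exhaust by blast
        let ?u = "chi a0"
        have cv: "chi a' = chi a0 @ [if 0 < z then 1 else 0]" unfolding a0 by (rule chi_snoc)
        have lv0: "length ?u = length w0" using lw0 a0 by simp
        show ?thesis
        proof (cases "y0 = 0")
          case True
          have lw1: "length (w0 @ [1]) = length a'" using lw0 by simp
          have w1b: "set (w0 @ [1]) \<subseteq> {0, 1}" using w0b by auto
          define c where "c = (if 0 < z then 1 else (0::nat))"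
          have cv': "chi a' = chi a0 @ [c]" using cv c_def by simp
          have lv1: "length (chi a') = length (w0 @ [0])" using lw0 by simp
          have d1: "dominates (chi a' @ [0]) ((w0 @ [0]) @ [1]) = (dominates (chi a') (w0 @ [0]) \<and> sum_list (w0 @ [0]) + 1 \<le> sum_list (chi a') + 0)"
            by (rule dom_snoc[OF lv1])
          have d2: "dominates (chi a0 @ [c]) (w0 @ [0]) = (dominates (chi a0) w0 \<and> sum_list w0 + 0 \<le> sum_list (chi a0) + c)"
            by (rule dom_snoc[OF lv0])
          have d3: "dominates (chi a0 @ [c]) (w0 @ [1]) = (dominates (chi a0) w0 \<and> sum_list w0 + 1 \<le> sum_list (chi a0) + c)"
            by (rule dom_snoc[OF lv0])
          have "dominates (?v @ [0]) ((w0 @ [0]) @ [1]) = dominates ?v (w0 @ [1])"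
          proof -
            have "dominates (?v @ [0]) ((w0 @ [0]) @ [1]) = (dominates (chi a0 @ [c]) (w0 @ [0]) \<and> sum_list (w0 @ [0]) + 1 \<le> sum_list (chi a0 @ [c]) + 0)"
              using d1 cv' by simp
            also have "\<dots> = (dominates (chi a0) w0 \<and> sum_list w0 + 1 \<le> sum_list (chi a0) + c)"
              using d2 by auto
            also have "\<dots> = dominates ?v (w0 @ [1])" using d3 cv' by simp
            finally show ?thesis .
          qed
          moreover have "zp (?v @ [0]) (w0 @ [0, 1]) = zp ?v (w0 @ [1])"
            using zp_snoc001 lw0 by simp
          ultimately show ?thesis
            using case001[OF lw0] snoc.IH[OF lw1 w1b] w y1 x0 snoc True ca by simp
        next
          case False
          hence y01: "y0 = 1" using y0b by simp
          have "\<not> (dominates (?v @ [0]) (w0 @ [1, 1]) \<and> zp (?v @ [0]) (w0 @ [1, 1]))"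
          proof (cases "zeros w0 = {}")
            case True
            have s0: "sum_list w0 = length w0" using sum_ones[OF True w0b] .
            have sv: "sum_list ?v \<le> length ?v" using sum_bin[OF vb] .
            have "length (?v @ [0]) = length (w0 @ [1, 1])" using lw0 by simp
            hence "dominates (?v @ [0]) (w0 @ [1, 1]) \<Longrightarrow> sum_list (w0 @ [1, 1]) \<le> sum_list (?v @ [0])"
              using dom_sum by blast
            then show ?thesis using s0 sv lw0 by auto
          next
            case False
            then show ?thesis using zp_snoc011[of ?v w0] lw0 by simp
          qed
          then show ?thesis using case011[OF lw0] w y1 x0 snoc y01 ca by auto
        qed
      qed
    qed
  qed
qed

lemma feas_uniq:
  "length b = length a \<Longrightarrow> length b' = length a \<Longrightarrow> feas a b \<Longrightarrow> feas a b' \<Longrightarrow> chi b = chi b' \<Longrightarrow> b = b'"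
proof (induction a arbitrary: b b' rule: rev_induct)
  case Nil then show ?case by simp
next
  case (snoc x a)
  obtain b0 t where b: "b = b0 @ [t]" using snoc.prems(1) by (metis rev_exhaust length_0_conv snoc_eq_iff_butlast Nil_is_append_conv not_Cons_self2)
  obtain b0' t' where b': "b' = b0' @ [t']" using snoc.prems(2) by (metis rev_exhaust length_0_conv snoc_eq_iff_butlast Nil_is_append_conv not_Cons_self2)
  have l: "length a = length b0" "length a = length b0'" using snoc.prems b b' by auto
  have f: "feas a b0" "0 < t \<longrightarrow> int (sum_list a + x) - int (sum_list b0 + t) = 0"
    using feas_snoc[OF l(1), of x t] snoc.prems(3) b by auto
  have f': "feas a b0'" "0 < t' \<longrightarrow> int (sum_list a + x) - int (sum_list b0' + t') = 0"
    using feas_snoc[OF l(2), of x t'] snoc.prems(4) b' by auto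
  have c: "chi b0 = chi b0'" "(if 0 < t then 1 else 0) = (if 0 < t' then 1 else (0::nat))"
    using snoc.prems(5) b b' l by (auto simp: chi_snoc)
  have "b0 = b0'" using snoc.IH[of b0 b0'] l f(1) f'(1) c(1) by simp
  moreover have "t = t'" using c(2) f(2) f'(2) calculation by (auto split: if_splits)
  ultimately show ?case using b b' by simp
qed

definition nxt :: "nat \<Rightarrow> nat \<Rightarrow> vtx" where
  "nxt n i = (if i < n then V (Suc i) 0 else S)"

lemma outs_m1: "1 \<le> i \<Longrightarrow> i \<le> n \<Longrightarrow> {e\<in>htop_arcs n. fst e = V i (-1)} = {(V i (-1), V i 0)}"
  unfolding htop_arcs_def by auto

lemma ins_m1: "{e\<in>htop_arcs n. snd e = V i (-1)} = {}"
  unfolding htop_arcs_def by auto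

lemma outs_0: "1 \<le> i \<Longrightarrow> i \<le> n \<Longrightarrow> {e\<in>htop_arcs n. fst e = V i 0} = {(V i 0, V i 1), (V i 0, nxt n i)}"
  unfolding htop_arcs_def nxt_def by auto

lemma ins_0: "1 \<le> i \<Longrightarrow> i \<le> n \<Longrightarrow> {e\<in>htop_arcs n. snd e = V i 0} =
   insert (V i (-1), V i 0) (if 1 < i then {(V (i - 1) 0, V i 0)} else {})"
  unfolding htop_arcs_def by auto

lemma outs_1: "{e\<in>htop_arcs n. fst e = V i 1} = {}"
  unfolding htop_arcs_def by auto

lemma ins_1: "1 \<le> i \<Longrightarrow> i \<le> n \<Longrightarrow> {e\<in>htop_arcs n. snd e = V i 1} = {(V i 0, V i 1)}"
  unfolding htop_arcs_def by auto

lemma outs_S: "{e\<in>htop_arcs n. fst e = S} = {}"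
  unfolding htop_arcs_def by auto

lemma ins_S: "{e\<in>htop_arcs n. snd e = S} = {(V n 0, S)}"
  unfolding htop_arcs_def by auto

lemma sc0: "sc a b 0 = 0" unfolding sc_def by simp

lemma sc_step:
  assumes "1 \<le> i" "i \<le> length a" "length b = length a"
  shows "sc a b i = sc a b (i - 1) + int (a ! (i - 1)) - int (b ! (i - 1))"
proof -
  obtain k where k: "i = Suc k" using assms(1) by (cases i) auto
  have "take i a = take k a @ [a ! k]" "take i b = take k b @ [b ! k]"
    using assms k by (auto simp: take_Suc_conv_app_nth)
  thus ?thesis unfolding sc_def using k by simp
qed

lemma verts_V: "V i k \<in> htop_verts n \<longleftrightarrow> 1 \<le> i \<and> i \<le> n \<and> k \<in> {-1, 0, 1}"
  unfolding htop_verts_def by auto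

lemma verts_S: "S \<in> htop_verts n"
  unfolding htop_verts_def by auto

lemma arc_e1: "1 \<le> i \<Longrightarrow> i \<le> n \<Longrightarrow> (V i (-1), V i 0) \<in> htop_arcs n"
  unfolding htop_arcs_def by auto
lemma arc_e2: "1 \<le> i \<Longrightarrow> i \<le> n \<Longrightarrow> (V i 0, V i 1) \<in> htop_arcs n"
  unfolding htop_arcs_def by auto
lemma arc_e3: "1 \<le> i \<Longrightarrow> i \<le> n \<Longrightarrow> (V i 0, nxt n i) \<in> htop_arcs n"
  unfolding htop_arcs_def nxt_def by auto

lemma arcs_cases:
  assumes "e \<in> htop_arcs n" and n0: "0 < n"
  obtains i where "1 \<le> i" "i \<le> n" "e = (V i (-1), V i 0)"
  | i where "1 \<le> i" "i \<le> n" "e = (V i 0, V i 1)"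
  | i where "1 \<le> i" "i \<le> n" "e = (V i 0, nxt n i)"
proof -
  consider (a) i where "1 \<le> i" "i \<le> n" "e = (V i (-1), V i 0)"
    | (b) i where "1 \<le> i" "i \<le> n" "e = (V i 0, V i 1)"
    | (c) i where "1 \<le> i" "i \<le> n - 1" "e = (V i 0, V (i+1) 0)"
    | (d) "e = (V n 0, S)"
    using assms unfolding htop_arcs_def by blast
  then show ?thesis
  proof cases
    case (c i) then show ?thesis using that(3)[of i] by (simp add: nxt_def)
  next
    case d
    have "n \<noteq> 0" using n0 by auto
    then show ?thesis using d that(3)[of n] by (simp add: nxt_def)
  qed (use that in auto)
qed

lemma conserv:
  assumes "f \<in> flows n a b" "v \<in> htop_verts n"
  shows "(\<Sum>e\<in>{e\<in>htop_arcs n. fst e = v}. f e) - (\<Sum>e\<in>{e\<in>htop_arcs n. snd e = v}. f e) = netflow a b v"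
  using assms unfolding flows_def by auto

lemma nxt_ne: "(V i 0, V i 1) \<noteq> (V i 0, nxt n i)"
  unfolding nxt_def by auto

lemma flow_vals:
  assumes f: "f \<in> flows n a b" and la: "length a = n" and lb: "length b = n"
    and i: "1 \<le> i" "i \<le> n"
  shows "f (V i (-1), V i 0) = real (a ! (i - 1))"
    and "f (V i 0, V i 1) = real (b ! (i - 1))"
    and "f (V i 0, V i 1) + f (V i 0, nxt n i) - f (V i (-1), V i 0)
          - (if 1 < i then f (V (i - 1) 0, V i 0) else 0) = 0"
proof -
  show "f (V i (-1), V i 0) = real (a ! (i - 1))"
    using conserv[OF f, of "V i (-1)"] i by (simp add: verts_V outs_m1 ins_m1 netflow_def)
  show "f (V i 0, V i 1) = real (b ! (i - 1))"
    using conserv[OF f, of "V i 1"] i by (simp add: verts_V outs_1 ins_1 netflow_def)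
  have ne: "(V i (-1), V i 0) \<notin> (if 1 < i then {(V (i - 1) 0, V i 0)} else {})" by auto
  show "f (V i 0, V i 1) + f (V i 0, nxt n i) - f (V i (-1), V i 0)
          - (if 1 < i then f (V (i - 1) 0, V i 0) else 0) = 0"
    using conserv[OF f, of "V i 0"] i nxt_ne[of i n]
    by (simp add: verts_V outs_0 ins_0 netflow_def sum.insert_if split: if_splits)
qed

lemma flow_carry:
  assumes f: "f \<in> flows n a b" and la: "length a = n" and lb: "length b = n"
  shows "1 \<le> i \<Longrightarrow> i \<le> n \<Longrightarrow> f (V i 0, nxt n i) = of_int (sc a b i)"
proof (induction i)
  case 0 then show ?case by simp
next
  case (Suc k)
  note v = flow_vals[OF f la lb Suc.prems]
  show ?case
  proof (cases "k = 0")
    case True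
    then show ?thesis using v sc_step[of 1 a b] sc0[of a b] la lb Suc.prems by simp
  next
    case False
    have nk: "nxt n k = V (Suc k) 0" using Suc.prems unfolding nxt_def by simp
    have "f (V k 0, nxt n k) = of_int (sc a b k)" using Suc.IH False Suc.prems by simp
    then show ?thesis using v sc_step[of "Suc k" a b] la lb Suc.prems False nk by simp
  qed
qed

definition fl :: "nat \<Rightarrow> nat list \<Rightarrow> nat list \<Rightarrow> vtx \<times> vtx \<Rightarrow> real" where
  "fl n a b e = (if e \<in> htop_arcs n then
     (case e of (V i k, V i' k') \<Rightarrow> (if k = -1 then real (a ! (i - 1))
                 else if k' = 1 then real (b ! (i - 1)) else of_int (sc a b i))
              | (V i k, S) \<Rightarrow> of_int (sc a b i)
              | (S, _) \<Rightarrow> 0) else 0)"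

lemma fl_e1: "1 \<le> i \<Longrightarrow> i \<le> n \<Longrightarrow> fl n a b (V i (-1), V i 0) = real (a ! (i - 1))"
  using arc_e1 unfolding fl_def by simp
lemma fl_e2: "1 \<le> i \<Longrightarrow> i \<le> n \<Longrightarrow> fl n a b (V i 0, V i 1) = real (b ! (i - 1))"
  using arc_e2 unfolding fl_def by simp
lemma fl_e3: "1 \<le> i \<Longrightarrow> i \<le> n \<Longrightarrow> fl n a b (V i 0, nxt n i) = of_int (sc a b i)"
  using arc_e3[of i n] unfolding fl_def by (simp add: nxt_def)

lemma verts_cases:
  assumes "v \<in> htop_verts n"
  obtains i where "1 \<le> i" "i \<le> n" "v = V i (-1)"
  | i where "1 \<le> i" "i \<le> n" "v = V i 0"
  | i where "1 \<le> i" "i \<le> n" "v = V i 1"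
  | "v = S"
  using assms unfolding htop_verts_def by auto

lemma F1:
  assumes n0: "0 < n" and la: "length a = n" and lb: "length b = n"
    and u: "unsplittable n a b f"
  shows "feas a b \<and> f = fl n a b"
proof -
  have f: "f \<in> flows n a b" using u unfolding unsplittable_def by blast
  have nonneg: "\<And>e. e \<in> htop_arcs n \<Longrightarrow> 0 \<le> f e" and off: "\<And>e. e \<notin> htop_arcs n \<Longrightarrow> f e = 0"
    using f unfolding flows_def by auto
  have card: "\<And>v. v \<in> htop_verts n \<Longrightarrow> card {e\<in>htop_arcs n. fst e = v \<and> 0 < f e} \<le> 1"
    using u unfolding unsplittable_def by blast
  note carry = flow_carry[OF f la lb]
  note vals = flow_vals[OF f la lb]
  have feas: "feas a b" unfolding feas_def
  proof (intro allI impI conjI)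
    fix k assume k: "k \<le> length a"
    show "0 \<le> sc a b k"
    proof (cases "k = 0")
      case True then show ?thesis by (simp add: sc0)
    next
      case False
      then show ?thesis using nonneg[OF arc_e3[of k n]] carry[of k] k la by simp
    qed
    assume k0: "0 < k" and bk: "0 < b ! (k - 1)"
    have k1: "1 \<le> k" "k \<le> n" using k0 k la by auto
    have g: "f (V k 0, nxt n k) = of_int (sc a b k)" using carry k1 by simp
    have ge: "0 \<le> sc a b k" using nonneg[OF arc_e3[OF k1]] g by simp
    show "sc a b k = 0"
    proof (rule ccontr)
      assume "sc a b k \<noteq> 0"
      hence p3: "0 < f (V k 0, nxt n k)" using ge g by simp
      have p2: "0 < f (V k 0, V k 1)" using vals(2)[OF k1] bk by simp
      let ?T = "{e\<in>htop_arcs n. fst e = V k 0 \<and> 0 < f e}"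
      have sub: "{(V k 0, V k 1), (V k 0, nxt n k)} \<subseteq> ?T"
        using p2 p3 arc_e2[OF k1] arc_e3[OF k1] by auto
      have fin: "finite ?T"
      proof (rule finite_subset[of _ "{(V k 0, V k 1), (V k 0, nxt n k)}"])
        show "?T \<subseteq> {(V k 0, V k 1), (V k 0, nxt n k)}" using outs_0[OF k1] by blast
      qed simp
      have "card {(V k 0, V k 1), (V k 0, nxt n k)} \<le> card ?T" by (rule card_mono[OF fin sub])
      moreover have "card {(V k 0, V k 1), (V k 0, nxt n k)} = 2" using nxt_ne[of k n] by simp
      moreover have "card ?T \<le> 1" using card[of "V k 0"] k1 by (simp add: verts_V)
      ultimately show False by simp
    qed
  qed
  have "f = fl n a b"
  proof
    fix e
    show "f e = fl n a b e"
    proof (cases "e \<in> htop_arcs n")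
      case False then show ?thesis using off by (simp add: fl_def)
    next
      case True
      then show ?thesis
      proof (cases rule: arcs_cases[OF True n0])
        case (1 i) then show ?thesis using vals(1) fl_e1 by simp
      next
        case (2 i) then show ?thesis using vals(2) fl_e2 by simp
      next
        case (3 i) then show ?thesis using carry fl_e3 by simp
      qed
    qed
  qed
  with feas show ?thesis by simp
qed

lemma card_le1_sub: "A \<subseteq> {x} \<Longrightarrow> card A \<le> 1"
  using card_mono[of "{x}" A] by simp

lemma F2_cons:
  assumes n0: "0 < n" and la: "length a = n" and lb: "length b = n" and fe: "feas a b"
    and v: "v \<in> htop_verts n"
  shows "(\<Sum>e\<in>{e\<in>htop_arcs n. fst e = v}. fl n a b e) - (\<Sum>e\<in>{e\<in>htop_arcs n. snd e = v}. fl n a b e) = netflow a b v"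
proof (cases rule: verts_cases[OF v])
  case (1 i) then show ?thesis by (simp add: outs_m1 ins_m1 fl_e1 netflow_def)
next
  case (3 i) then show ?thesis by (simp add: outs_1 ins_1 fl_e2 netflow_def)
next
  case 4
  have "nxt n n = S" unfolding nxt_def by simp
  hence "fl n a b (V n 0, S) = of_int (sc a b n)" using fl_e3[of n n a b] n0 by simp
  moreover have "sc a b n = int (sum_list a) - int (sum_list b)" unfolding sc_def using la lb by simp
  ultimately show ?thesis using 4 by (simp add: outs_S ins_S netflow_def)
next
  case (2 i)
  have prev: "1 < i \<Longrightarrow> fl n a b (V (i - 1) 0, V i 0) = of_int (sc a b (i - 1))"
  proof -
    assume "1 < i"
    hence "nxt n (i - 1) = V i 0" using 2 unfolding nxt_def by auto
    thus ?thesis using fl_e3[of "i - 1" n a b] 2 \<open>1 < i\<close> by simp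
  qed
  have st: "sc a b i = sc a b (i - 1) + int (a ! (i - 1)) - int (b ! (i - 1))"
    using sc_step[of i a b] 2 la lb by simp
  have so: "(\<Sum>e\<in>{e\<in>htop_arcs n. fst e = v}. fl n a b e) = real (b ! (i - 1)) + of_int (sc a b i)"
    using 2 nxt_ne[of i n] fl_e2[of i n a b] fl_e3[of i n a b] by (simp add: outs_0)
  have si: "(\<Sum>e\<in>{e\<in>htop_arcs n. snd e = v}. fl n a b e) = real (a ! (i - 1)) + of_int (sc a b (i - 1))"
  proof (cases "1 < i")
    case True
    have "(\<Sum>e\<in>{e\<in>htop_arcs n. snd e = v}. fl n a b e) = fl n a b (V i (-1), V i 0) + fl n a b (V (i - 1) 0, V i 0)"
      using 2 True by (simp add: ins_0)
    then show ?thesis using prev True fl_e1[of i n a b] 2 by simp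
  next
    case False
    hence "i = 1" using 2 by simp
    then show ?thesis using 2 fl_e1[of i n a b] sc0[of a b] by (simp add: ins_0)
  qed
  show ?thesis using so si st 2 by (simp add: netflow_def)
qed

lemma F2:
  assumes n0: "0 < n" and la: "length a = n" and lb: "length b = n" and fe: "feas a b"
  shows "unsplittable n a b (fl n a b)"
proof -
  let ?f = "fl n a b"
  have scn: "\<And>k. 1 \<le> k \<Longrightarrow> k \<le> n \<Longrightarrow> 0 \<le> sc a b k" using fe la unfolding feas_def by auto
  have scz: "\<And>k. 1 \<le> k \<Longrightarrow> k \<le> n \<Longrightarrow> 0 < b ! (k - 1) \<Longrightarrow> sc a b k = 0" using fe la unfolding feas_def by auto
  have off: "\<forall>e. e \<notin> htop_arcs n \<longrightarrow> ?f e = 0" unfolding fl_def by simp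
  have nonneg: "\<forall>e\<in>htop_arcs n. 0 \<le> ?f e"
  proof
    fix e assume e: "e \<in> htop_arcs n"
    show "0 \<le> ?f e"
    proof (cases rule: arcs_cases[OF e n0])
      case (1 i) then show ?thesis using fl_e1 by simp
    next
      case (2 i) then show ?thesis using fl_e2 by simp
    next
      case (3 i) then show ?thesis using fl_e3 scn by simp
    qed
  qed
  have cons: "\<forall>v\<in>htop_verts n.
           (\<Sum>e\<in>{e\<in>htop_arcs n. fst e = v}. ?f e) - (\<Sum>e\<in>{e\<in>htop_arcs n. snd e = v}. ?f e)
             = netflow a b v"
    using F2_cons[OF n0 la lb fe] by blast
  have ints: "\<forall>e\<in>htop_arcs n. ?f e \<in> \<int>"
  proof
    fix e assume e: "e \<in> htop_arcs n"
    show "?f e \<in> \<int>"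
    proof (cases rule: arcs_cases[OF e n0])
      case (1 i) then show ?thesis using fl_e1 by simp
    next
      case (2 i) then show ?thesis using fl_e2 by simp
    next
      case (3 i) then show ?thesis using fl_e3 by simp
    qed
  qed
  have card: "\<forall>v\<in>htop_verts n. card {e\<in>htop_arcs n. fst e = v \<and> 0 < ?f e} \<le> 1"
  proof
    fix v assume v: "v \<in> htop_verts n"
    show "card {e\<in>htop_arcs n. fst e = v \<and> 0 < ?f e} \<le> 1"
    proof (cases rule: verts_cases[OF v])
      case (1 i)
      have "{e\<in>htop_arcs n. fst e = v \<and> 0 < ?f e} \<subseteq> {(V i (-1), V i 0)}"
        using outs_m1[of i n] 1 by blast
      then show ?thesis by (rule card_le1_sub)
    next
      case (3 i)
      have "{e\<in>htop_arcs n. fst e = v \<and> 0 < ?f e} \<subseteq> {}"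
        using outs_1[of n i] 3 by blast
      then have "{e\<in>htop_arcs n. fst e = v \<and> 0 < ?f e} = {}" by blast
      then show ?thesis by (simp only: card.empty le0)
    next
      case 4
      have "{e\<in>htop_arcs n. fst e = v \<and> 0 < ?f e} \<subseteq> {}"
        using outs_S[of n] 4 by blast
      then have "{e\<in>htop_arcs n. fst e = v \<and> 0 < ?f e} = {}" by blast
      then show ?thesis by (simp only: card.empty le0)
    next
      case (2 i)
      have O: "{e\<in>htop_arcs n. fst e = v} = {(V i 0, V i 1), (V i 0, nxt n i)}"
        using outs_0[of i n] 2 by simp
      show ?thesis
      proof (cases "0 < b ! (i - 1)")
        case True
        have z: "?f (V i 0, nxt n i) = 0" using fl_e3[of i n a b] scz[of i] 2 True by simp
        have "{e\<in>htop_arcs n. fst e = v \<and> 0 < ?f e} \<subseteq> {(V i 0, V i 1)}"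
        proof
          fix e assume "e \<in> {e\<in>htop_arcs n. fst e = v \<and> 0 < ?f e}"
          hence m: "e \<in> {e\<in>htop_arcs n. fst e = v}" and p: "0 < ?f e" by blast+
          have "e \<in> {(V i 0, V i 1), (V i 0, nxt n i)}" using m O by blast
          hence "e = (V i 0, V i 1) \<or> e = (V i 0, nxt n i)" by blast
          moreover have "e \<noteq> (V i 0, nxt n i)" proof
            assume "e = (V i 0, nxt n i)" with p z show False by simp
          qed
          ultimately show "e \<in> {(V i 0, V i 1)}" by blast
        qed
        then show ?thesis by (rule card_le1_sub)
      next
        case False
        have z: "?f (V i 0, V i 1) = 0" using fl_e2[of i n a b] 2 False by simp
        have "{e\<in>htop_arcs n. fst e = v \<and> 0 < ?f e} \<subseteq> {(V i 0, nxt n i)}"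
        proof
          fix e assume "e \<in> {e\<in>htop_arcs n. fst e = v \<and> 0 < ?f e}"
          hence m: "e \<in> {e\<in>htop_arcs n. fst e = v}" and p: "0 < ?f e" by blast+
          have "e \<in> {(V i 0, V i 1), (V i 0, nxt n i)}" using m O by blast
          hence "e = (V i 0, V i 1) \<or> e = (V i 0, nxt n i)" by blast
          moreover have "e \<noteq> (V i 0, V i 1)" proof
            assume "e = (V i 0, V i 1)" with p z show False by simp
          qed
          ultimately show "e \<in> {(V i 0, nxt n i)}" by blast
        qed
        then show ?thesis by (rule card_le1_sub)
      qed
    qed
  qed
  have neg: "\<forall>v\<in>htop_verts n. netflow a b v < 0 \<longrightarrow> (\<forall>e\<in>htop_arcs n. fst e = v \<longrightarrow> ?f e = 0)"
  proof (intro ballI impI)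
    fix v e assume v: "v \<in> htop_verts n" and nv: "netflow a b v < 0" and e: "e \<in> htop_arcs n" and fe: "fst e = v"
    have "0 \<le> netflow a b (fst e)"
      by (cases rule: arcs_cases[OF e n0]) (auto simp: netflow_def)
    then show "?f e = 0" using nv fe by simp
  qed
  have "?f \<in> flows n a b" unfolding flows_def using off nonneg cons by (intro CollectI conjI)
  then show ?thesis unfolding unsplittable_def using ints card neg by (intro conjI)
qed

theorem lemma5p12:
  fixes n :: nat and a :: "nat list"
  assumes "0 < n" and "length a = n"
  shows "(\<forall>j. length j = n \<and> set j \<subseteq> {0, 1} \<and> dominates1 (chi a) j \<longrightarrow>
            (\<exists>!b. length b = n \<and> chi b = j \<and> (\<exists>f. unsplittable n a b f))
          \<and> (\<forall>b. length b = n \<and> chi b = j \<and> (\<exists>f. unsplittable n a b f) \<longrightarrow>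
                 (\<exists>!f. unsplittable n a b f)))
       \<and> (\<forall>b. length b = n \<and> \<not> dominates1 (chi a) (chi b) \<longrightarrow>
              \<not> (\<exists>f. unsplittable n a b f))"
proof (intro conjI allI impI)
  fix j assume j: "length j = n \<and> set j \<subseteq> {0, 1} \<and> dominates1 (chi a) j"
  have "dominates (chi a) j \<and> zp (chi a) j" using d1_bin[OF chi_bin] j by blast
  then obtain b where b: "chi b = j" "feas a b" using mainL[of j a] j assms(2) by auto
  have lb: "length b = n" using len_of_chi[OF b(1)] j by simp
  have u: "unsplittable n a b (fl n a b)" using F2[OF assms(1,2) lb b(2)] .
  show "\<exists>!b. length b = n \<and> chi b = j \<and> (\<exists>f. unsplittable n a b f)"
  proof (rule ex1I[of _ b])
    show "length b = n \<and> chi b = j \<and> (\<exists>f. unsplittable n a b f)" using lb b u by blast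
  next
    fix b2 assume b2: "length b2 = n \<and> chi b2 = j \<and> (\<exists>f. unsplittable n a b2 f)"
    then obtain f where "unsplittable n a b2 f" by blast
    hence "feas a b2" using F1[OF assms(1,2)] b2 by blast
    thus "b2 = b" using feas_uniq[of b2 a b] b2 lb assms(2) b by simp
  qed
next
  fix j b assume b: "length b = n \<and> chi b = j \<and> (\<exists>f. unsplittable n a b f)"
  then obtain f where f: "unsplittable n a b f" by blast
  have ff: "f = fl n a b" using F1[OF assms(1,2) _ f] b by blast
  show "\<exists>!f. unsplittable n a b f"
  proof (rule ex1I[of _ f])
    show "unsplittable n a b f" by (rule f)
  next
    fix g assume "unsplittable n a b g"
    thus "g = f" using F1[OF assms(1,2)] b ff by blast
  qed
next
  fix b assume b: "length b = n \<and> \<not> dominates1 (chi a) (chi b)"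
  show "\<not> (\<exists>f. unsplittable n a b f)"
  proof
    assume "\<exists>f. unsplittable n a b f"
    then obtain f where "unsplittable n a b f" by blast
    hence fe: "feas a b" using F1[OF assms(1,2)] b by blast
    have "dominates (chi a) (chi b) \<and> zp (chi a) (chi b)"
      using mainL[of "chi b" a] fe b assms(2) chi_bin[of b] by auto
    hence "dominates1 (chi a) (chi b)" using d1_bin[OF chi_bin chi_bin] by blast
    with b show False by blast
  qed
qed

end
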